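(* There is an absolute constant $C_0$ such that the following holds for every integer $m\ge2$. Let $T$ be the balanced binary tree with $m$ leaves, and suppose that at least a $1/4$ fraction of the nodes of $T$ are marked. If $u$ is chosen uniformly at random among the marked nodes of $T$, then the expected number of nodes in the subtree of $T$ rooted at $u$ is at most $C_0\log m$.
   Context: The balanced binary tree with $m$ leaves is defined as follows: if $m=2^k$, it is the complete binary tree with $2^k$ leaves (all at depth $k$); if $2^k<m<2^{k+1}$, take the complete binary tree with $2^k$ leaves and add a pair of children to each of its $m-2^k$ leftmost leaves. It has $m$ leaves and $m-1$ internal nodes; "nodes" means all nodes (internal and leaves). *)

theory Defs
  imports Complex_Main "HOL-Library.Sublist"
begin

text \<open>Nodes of a binary tree are encoded as root-to-node paths: lists of booleans,
  False = left child, True = right child. The root is [].\<close>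

text \<open>Value of a path read as a binary number, first step most significant;
  so among paths of equal length, smaller value = further left.\<close>
definition path_val :: "bool list \<Rightarrow> nat" where
  "path_val p = foldl (\<lambda>acc b. 2 * acc + (if b then 1 else 0)) 0 p"

definition bt_depth :: "nat \<Rightarrow> nat" where
  "bt_depth m = (GREATEST k. 2 ^ k \<le> m)"

text \<open>Balanced binary tree with m leaves: complete tree of depth k, plus children of the
  (m - 2^k) leftmost depth-k leaves.\<close>
definition bt_nodes :: "nat \<Rightarrow> bool list set" where
  "bt_nodes m = {p. length p \<le> bt_depth m} \<union>
     {p. length p = Suc (bt_depth m) \<and> path_val (take (bt_depth m) p) < m - 2 ^ bt_depth m}"

definition subtree_size :: "nat \<Rightarrow> bool list \<Rightarrow> nat" where
  "subtree_size m u = card {v \<in> bt_nodes m. prefix u v}"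

end

theory Submission
  imports Defs
begin

lemma depth_props:
  assumes "m \<ge> 1"
  shows "2 ^ bt_depth m \<le> m"
proof -
  have b: "y \<le> m" if "2 ^ y \<le> m" for y :: nat
  proof -
    have "y < 2 ^ y" by (rule less_exp)
    thus ?thesis using that by linarith
  qed
  have z: "(2::nat) ^ 0 \<le> m" using assms by simp
  show ?thesis unfolding bt_depth_def by (rule GreatestI_nat[of "\<lambda>k. 2 ^ k \<le> m", OF z b])
qed

lemma nodes_sub: "bt_nodes m \<subseteq> {p. length p \<le> Suc (bt_depth m)}"
  unfolding bt_nodes_def by auto

lemma nodes_finite: "finite (bt_nodes m)"
proof -
  have "finite {xs::bool list. set xs \<subseteq> UNIV \<and> length xs \<le> Suc (bt_depth m)}"
    by (rule finite_lists_length_le) simp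
  hence "finite {p::bool list. length p \<le> Suc (bt_depth m)}" by simp
  thus ?thesis using nodes_sub finite_subset by blast
qed

lemma pref_card: "v \<in> bt_nodes m \<Longrightarrow> card {u\<in>bt_nodes m. prefix u v} \<le> bt_depth m + 2"
proof -
  assume v: "v \<in> bt_nodes m"
  have "{u\<in>bt_nodes m. prefix u v} \<subseteq> set (prefixes v)" by auto
  hence "card {u\<in>bt_nodes m. prefix u v} \<le> card (set (prefixes v))"
    by (rule card_mono[OF finite_set])
  also have "\<dots> \<le> length (prefixes v)" by (rule card_length)
  also have "\<dots> = length v + 1" by simp
  also have "\<dots> \<le> bt_depth m + 2" using nodes_sub v by auto
  finally show ?thesis .
qed

lemma total_sum: "(\<Sum>u\<in>bt_nodes m. subtree_size m u) \<le> card (bt_nodes m) * (bt_depth m + 2)"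
proof -
  let ?N = "bt_nodes m"
  have f: "finite ?N" by (rule nodes_finite)
  have "(\<Sum>u\<in>?N. subtree_size m u) = (\<Sum>u\<in>?N. \<Sum>v\<in>?N. if prefix u v then 1 else 0)"
    unfolding subtree_size_def using f by (simp add: sum.inter_filter[symmetric])
  also have "\<dots> = (\<Sum>v\<in>?N. \<Sum>u\<in>?N. if prefix u v then 1 else 0)" by (rule sum.swap)
  also have "\<dots> = (\<Sum>v\<in>?N. card {u\<in>?N. prefix u v})"
    using f by (simp add: sum.inter_filter[symmetric])
  also have "\<dots> \<le> (\<Sum>v\<in>?N. bt_depth m + 2)" by (rule sum_mono) (rule pref_card)
  also have "\<dots> = card ?N * (bt_depth m + 2)" by simp
  finally show ?thesis .
qed

theorem lemma24:
  shows "\<exists>C0::real. \<forall>m::nat. m \<ge> 2 \<longrightarrow>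
     (\<forall>M. M \<subseteq> bt_nodes m \<and> 4 * card M \<ge> card (bt_nodes m) \<longrightarrow>
        (\<Sum>u\<in>M. real (subtree_size m u)) / real (card M) \<le> C0 * ln (real m))"
proof (intro exI[of _ "12 / ln 2"] allI impI, elim conjE)
  fix m :: nat and M
  assume m: "m \<ge> 2" and MN: "M \<subseteq> bt_nodes m" and c: "4 * card M \<ge> card (bt_nodes m)"
  let ?N = "bt_nodes m" let ?k = "bt_depth m"
  have "[] \<in> ?N" unfolding bt_nodes_def by simp
  hence "card ?N \<ge> 1" using nodes_finite by (metis One_nat_def Suc_leI card_gt_0_iff empty_iff)
  hence cM: "card M > 0" using c by linarith
  have "(\<Sum>u\<in>M. subtree_size m u) \<le> (\<Sum>u\<in>?N. subtree_size m u)"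
    by (rule sum_mono2[OF nodes_finite MN]) auto
  also have "\<dots> \<le> card ?N * (?k + 2)" by (rule total_sum)
  also have "\<dots> \<le> 4 * card M * (?k + 2)" by (rule mult_le_mono1[OF c])
  finally have s0: "(\<Sum>u\<in>M. subtree_size m u) \<le> 4 * card M * (?k + 2)" .
  have s: "(\<Sum>u\<in>M. real (subtree_size m u)) \<le> real (card M) * (4 * (real ?k + 2))"
  proof -
    have "(\<Sum>u\<in>M. real (subtree_size m u)) = real (\<Sum>u\<in>M. subtree_size m u)" by simp
    also have "\<dots> \<le> real (4 * card M * (?k + 2))" using s0 by (simp only: of_nat_le_iff)
    also have "\<dots> = real (card M) * (4 * (real ?k + 2))" by (simp add: algebra_simps)
    finally show ?thesis .
  qed
  have cMr: "real (card M) > 0" using cM by simp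
  have avg: "(\<Sum>u\<in>M. real (subtree_size m u)) / real (card M) \<le> 4 * (real ?k + 2)"
    using s cMr by (simp add: divide_le_eq mult.commute)
  have "2 ^ ?k \<le> m" using depth_props[of m] m by linarith
  hence "real (2 ^ ?k) \<le> real m" by (simp only: of_nat_le_iff)
  hence p: "(2::real) ^ ?k \<le> real m" by simp
  have "ln ((2::real) ^ ?k) \<le> ln (real m) \<longleftrightarrow> (2::real) ^ ?k \<le> real m"
    by (rule ln_le_cancel_iff) (use m in auto)
  hence "ln ((2::real) ^ ?k) \<le> ln (real m)" using p by blast
  hence k: "real ?k * ln 2 \<le> ln (real m)" by (simp only: ln_realpow)
  have l2: "ln (2::real) \<le> ln (real m)" using m by simp
  have l2p: "ln (2::real) > 0" by simp
  have "4 * (real ?k + 2) * ln 2 \<le> 12 * ln (real m)" 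
  proof -
    have "4 * (real ?k + 2) * ln 2 = 4 * (real ?k * ln 2) + 8 * ln (2::real)"
      by (simp add: algebra_simps)
    thus ?thesis using k l2 by linarith
  qed
  hence "4 * (real ?k + 2) \<le> (12 * ln (real m)) / ln 2"
    using pos_le_divide_eq[OF l2p] by blast
  also have "(12 * ln (real m)) / ln 2 = 12 / ln 2 * ln (real m)" by simp
  finally have f: "4 * (real ?k + 2) \<le> 12 / ln 2 * ln (real m)" .
  from avg f show "(\<Sum>u\<in>M. real (subtree_size m u)) / real (card M) \<le> 12 / ln 2 * ln (real m)"
    by (rule order_trans)
qed

end
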